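(* Let $s\in\mathbb C$ with $\Re s<0$ and let $w(x)=e^{s/x}$ for $x>0$, $w(0)=0$. Then for every $\sigma>-\Re s$, $\sup_{k\in\mathbb N}\sup_{x\in[0,\infty)}\frac{\sigma^k}{(k!)^2}\Big|\frac{d^k w}{dx^k}(x)\Big|=\infty.$ *)

theory Defs
  imports "HOL-Analysis.Analysis"
begin

fun kth_deriv :: "nat \<Rightarrow> (real \<Rightarrow> complex) \<Rightarrow> real \<Rightarrow> complex" where
  "kth_deriv 0 f = f"
| "kth_deriv (Suc k) f = (\<lambda>x. vector_derivative (kth_deriv k f) (at x within {0..}))"

definition wfun :: "complex \<Rightarrow> real \<Rightarrow> complex" where
  "wfun s x = (if x > 0 then exp (s / complex_of_real x) else 0)"

end

theory Submission imports Defs "HOL-Computational_Algebra.Polynomial" "HOL-Real_Asymp.Real_Asymp" begin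

fun P :: "complex \<Rightarrow> nat \<Rightarrow> complex poly" where
  "P s 0 = 1"
| "P s (Suc k) = - monom 1 2 * (pderiv (P s k) + smult s (P s k))"

definition F :: "complex \<Rightarrow> nat \<Rightarrow> real \<Rightarrow> complex" where
  "F s k x = poly (P s k) (1 / of_real x) * exp (s / of_real x)"

lemma G_deriv:
  assumes "z \<noteq> 0"
  shows "((\<lambda>z. poly p (1/z) * exp (s/z)) has_field_derivative
     poly (- monom 1 2 * (pderiv p + smult s p)) (1/z) * exp (s/z)) (at z)"
proof -
  have "((\<lambda>z. poly p (1/z) * exp (s/z)) has_field_derivative
     (poly (pderiv p) (1/z) * (-(1/z^2)) * exp(s/z) + poly p (1/z) * (exp(s/z) * (-s/z^2)))) (at z)"
    using assms
    by (auto intro!: derivative_eq_intros DERIV_chain2[OF poly_DERIV] simp: power2_eq_square)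
  moreover have "poly (pderiv p) (1/z) * (-(1/z^2)) * exp(s/z) + poly p (1/z) * (exp(s/z) * (-s/z^2))
     = poly (- monom 1 2 * (pderiv p + smult s p)) (1/z) * exp (s/z)"
    by (simp add: poly_monom algebra_simps power_divide)
  ultimately show ?thesis by simp
qed

lemma tl0: "(c::real) < 0 \<Longrightarrow> ((\<lambda>x. (1/x)^i * exp(c/x)) \<longlongrightarrow> 0) (at_right 0)"
  by real_asymp

lemma interior_ge0: "interior {0::real..} = {0<..}" by simp


lemma F_deriv: "x > 0 \<Longrightarrow> (F s k has_vector_derivative F s (Suc k) x) (at x)"
  unfolding F_def P.simps
  by (rule has_vector_derivative_real_field[of "\<lambda>z. poly (P s k) (1/z) * exp (s/z)", simplified])
     (rule G_deriv, simp)

lemma kth_eq: "x > 0 \<Longrightarrow> kth_deriv k (wfun s) x = F s k x"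
proof (induction k arbitrary: x)
  case 0
  then show ?case by (simp add: wfun_def F_def)
next
  case (Suc k)
  have "(kth_deriv k (wfun s) has_vector_derivative F s (Suc k) x) (at x)"
    by (rule has_vector_derivative_transform_within_open[OF F_deriv[OF Suc.prems], of "{0<..}"])
       (use Suc in auto)
  moreover have "at x within {0..} = at x"
    by (rule at_within_interior) (use Suc.prems in simp)
  ultimately show ?case by (simp add: vector_derivative_at)
qed

lemma F_lim:
  assumes "Re s < 0"
  shows "(F s k \<longlongrightarrow> 0) (at_right 0)"
proof -
  define p where "p = P s k"
  have le: "norm (F s k x) \<le> (\<Sum>i\<le>degree p. norm (coeff p i) * ((1/x)^i * exp (Re s / x)))"
    if "x > 0" for x
  proof -
    have A: "norm (poly p (1 / of_real x)) \<le> (\<Sum>i\<le>degree p. norm (coeff p i) * (1/x)^i)"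
      unfolding poly_altdef
      by (rule order.trans[OF norm_sum]) (use that in \<open>simp add: norm_mult norm_power norm_divide\<close>)
    have B: "norm (exp (s / of_real x)) = exp (Re s / x)"
      by simp
    have "norm (F s k x) \<le> (\<Sum>i\<le>degree p. norm (coeff p i) * (1/x)^i) * exp (Re s / x)"
      unfolding F_def p_def[symmetric] norm_mult B by (rule mult_right_mono[OF A]) simp
    then show ?thesis by (simp add: sum_distrib_right mult.assoc)
  qed
  have "((\<lambda>x. \<Sum>i\<le>degree p. norm (coeff p i) * ((1/x)^i * exp (Re s / x))) \<longlongrightarrow>
      (\<Sum>i\<le>degree p. norm (coeff p i) * 0)) (at_right 0)"
    by (intro tendsto_sum tendsto_mult tendsto_const tl0 assms)
  then have "((\<lambda>x. \<Sum>i\<le>degree p. norm (coeff p i) * ((1/x)^i * exp (Re s / x))) \<longlongrightarrow> 0) (at_right 0)"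
    by simp
  then show ?thesis
    apply (rule Lim_null_comparison[rotated])
    using le by (auto simp: eventually_at_right_field intro!: exI[of _ 1])
qed


lemma taylor_bound:
  assumes Res: "Re s < 0" and sig: "\<sigma> > 0" and M0: "M \<ge> 0"
    and bnd: "\<And>k x. x > 0 \<Longrightarrow> cmod (F s k x) \<le> M * (fact k)^2 / \<sigma>^k"
  shows "x > 0 \<Longrightarrow> cmod (F s j x) \<le> M * (fact (j+n))^2 / \<sigma>^(j+n) * x^n / fact n"
proof (induction n arbitrary: j x)
  case 0
  then show ?case using bnd by simp
next
  case (Suc n j x)
  define C where "C = M * (fact (j + Suc n))^2 / \<sigma>^(j + Suc n)"
  have C0: "C \<ge> 0" using M0 sig by (simp add: C_def)
  have IH: "cmod (F s (Suc j) t) \<le> C * t^n / fact n" if "t > 0" for t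
    using Suc.IH[of t "Suc j"] that unfolding C_def by simp
  have main: "cmod (F s j x) \<le> C * x^Suc n / fact (Suc n) + \<delta>" if "\<delta> > 0" for \<delta>
  proof -
    have "eventually (\<lambda>y. dist (F s j y) 0 < \<delta>) (at_right 0)"
      using tendstoD[OF F_lim[OF Res] that] .
    then obtain b where b: "b > 0" "\<And>y. 0 < y \<Longrightarrow> y < b \<Longrightarrow> dist (F s j y) 0 < \<delta>"
      by (auto simp: eventually_at_right_field)
    define \<epsilon> where "\<epsilon> = min b x / 2"
    have eps: "0 < \<epsilon>" "\<epsilon> < x" "\<epsilon> < b" using b Suc.prems by (auto simp: \<epsilon>_def)
    have fe: "cmod (F s j \<epsilon>) < \<delta>" using b(2)[OF eps(1) eps(3)] by simp
    show ?thesis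
    proof (cases "F s j x = 0")
      case True
      then show ?thesis using C0 that Suc.prems by simp
    next
      case False
      define u where "u = cnj (F s j x) / cmod (F s j x)"
      have nu: "cmod u = 1" using False by (simp add: u_def norm_divide)
      have "u * F s j x = of_real ((cmod (F s j x))^2) / cmod (F s j x)"
        using complex_norm_square[of "F s j x"] by (simp add: u_def field_simps del: of_real_power)
      then have ux: "Re (u * F s j x) = cmod (F s j x)"
        using False by (simp add: power2_eq_square)
      define h where "h t = Re (u * F s j t) - C * t^Suc n / fact (Suc n)" for t
      have hd: "DERIV h t :> (Re (u * F s (Suc j) t) - C * t^n / fact n)" if "t > 0" for t
      proof -
        have "((\<lambda>t. Re (u * F s j t)) has_field_derivative Re (u * F s (Suc j) t)) (at t)"
          by (intro has_field_derivative_Re has_vector_derivative_mult_right F_deriv that)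
        moreover have "((\<lambda>t. C * t^Suc n / fact (Suc n)) has_field_derivative C * t^n / fact n) (at t)"
        proof -
          have "((\<lambda>t. C * t^Suc n / fact (Suc n)) has_field_derivative C * (real (Suc n) * t^n) / fact (Suc n)) (at t)"
            by (intro DERIV_cdivide DERIV_cmult) (use DERIV_pow[of "Suc n" t] in simp)
          moreover have "C * (real (Suc n) * t^n) / fact (Suc n) = C * t^n / fact n"
            by (simp only: fact_Suc of_nat_mult) (simp add: field_simps del: of_nat_Suc)
          ultimately show ?thesis by simp
        qed
        ultimately show ?thesis unfolding h_def by (rule DERIV_diff)
      qed
      obtain \<xi> where xi: "\<epsilon> < \<xi>" "\<xi> < x"
        "h x - h \<epsilon> = (x - \<epsilon>) * (Re (u * F s (Suc j) \<xi>) - C * \<xi>^n / fact n)"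
        using MVT2[OF eps(2), of h "\<lambda>t. Re (u * F s (Suc j) t) - C * t^n / fact n"] hd eps
        by force
      have "Re (u * F s (Suc j) \<xi>) \<le> cmod (u * F s (Suc j) \<xi>)" by (rule complex_Re_le_cmod)
      also have "\<dots> = cmod (F s (Suc j) \<xi>)" using nu by (simp add: norm_mult)
      also have "\<dots> \<le> C * \<xi>^n / fact n" using IH xi eps by simp
      finally have "Re (u * F s (Suc j) \<xi>) - C * \<xi>^n / fact n \<le> 0" by simp
      then have "h x - h \<epsilon> \<le> 0" unfolding xi(3) using eps(2)
        by (intro mult_nonneg_nonpos) auto
      then have "cmod (F s j x) \<le> Re (u * F s j \<epsilon>) + C * x^Suc n / fact (Suc n) - C * \<epsilon>^Suc n / fact (Suc n)"
        unfolding h_def ux by simp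
      moreover have "Re (u * F s j \<epsilon>) \<le> cmod (F s j \<epsilon>)"
        using complex_Re_le_cmod[of "u * F s j \<epsilon>"] nu by (simp add: norm_mult)
      moreover have "C * \<epsilon>^Suc n / fact (Suc n) \<ge> 0" using C0 eps by simp
      ultimately show ?thesis using fe by linarith
    qed
  qed
  have "cmod (F s j x) \<le> C * x^Suc n / fact (Suc n)"
    by (rule field_le_epsilon) (rule main)
  then show ?case unfolding C_def by simp
qed


theorem lemmaA1:
  fixes s :: complex and \<sigma> :: real
  assumes "Re s < 0" and "\<sigma> > - Re s"
  shows "(SUP k::nat. SUP x\<in>{0::real..}.
            ereal (\<sigma> ^ k / (fact k)^2 * cmod (kth_deriv k (wfun s) x))) = \<infinity>"
proof (rule ccontr)
  define S where "S = (SUP k::nat. SUP x\<in>{0::real..}.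
            ereal (\<sigma> ^ k / (fact k)^2 * cmod (kth_deriv k (wfun s) x)))"
  assume "(SUP k::nat. SUP x\<in>{0::real..}.
            ereal (\<sigma> ^ k / (fact k)^2 * cmod (kth_deriv k (wfun s) x))) \<noteq> \<infinity>"
  then have ne: "S \<noteq> \<infinity>" unfolding S_def .
  have term_le: "ereal (\<sigma> ^ k / (fact k)^2 * cmod (kth_deriv k (wfun s) x)) \<le> S" if "x \<ge> 0" for k x
    unfolding S_def
    by (rule order.trans[OF _ SUP_upper[of k]]) (use that in \<open>auto intro: SUP_upper\<close>)
  have "0 \<le> S" using term_le[of 0 0] by (simp add: wfun_def zero_ereal_def)
  then obtain M where SM: "S = ereal M" using ne by (cases S) auto
  have M0: "M \<ge> 0" using \<open>0 \<le> S\<close> SM by simp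
  have sig: "\<sigma> > 0" using assms by simp
  have bnd: "cmod (F s k x) \<le> M * (fact k)^2 / \<sigma>^k" if "x > 0" for k x
  proof -
    have "\<sigma> ^ k / (fact k)^2 * cmod (F s k x) \<le> M"
      using term_le[of x k] that SM kth_eq[OF that, of k s] by simp
    then show ?thesis using sig by (simp add: field_simps)
  qed
  have tb: "exp (Re s / x) * ((\<sigma>/x)^n / fact n) \<le> M" if "x > 0" for x n
  proof -
    have "cmod (F s 0 x) \<le> M * (fact n)^2 / \<sigma>^n * x^n / fact n"
      using taylor_bound[OF assms(1) sig M0 bnd that, of 0 n] by simp
    moreover have "cmod (F s 0 x) = exp (Re s / x)"
      by (simp add: F_def)
    ultimately have "exp (Re s / x) \<le> M * fact n * (x/\<sigma>)^n"
      by (simp add: power2_eq_square power_divide)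
    then have "exp (Re s / x) * ((\<sigma>/x)^n / fact n) \<le> M * fact n * (x/\<sigma>)^n * ((\<sigma>/x)^n / fact n)"
      using sig that by (intro mult_right_mono) auto
    also have "\<dots> = M * ((x/\<sigma>) * (\<sigma>/x))^n"
      unfolding power_mult_distrib using sig that by simp
    also have "\<dots> = M" using sig that by simp
    finally show ?thesis .
  qed
  define l where "l = (\<sigma> - Re s) / (2 * \<sigma>)"
  have l: "0 < l" "l < 1" using assms sig by (auto simp: l_def field_simps)
  have sumb: "exp (Re s / x) * exp (l * \<sigma> / x) \<le> M * (1 / (1 - l))" if "x > 0" for x
  proof (rule sums_le)
    show "(\<lambda>n. exp (Re s / x) * ((l * \<sigma> / x)^n / fact n)) sums (exp (Re s / x) * exp (l * \<sigma> / x))"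
      by (rule sums_mult) (use exp_converges[of "l * \<sigma> / x"] in \<open>simp add: divide_inverse_commute\<close>)
    show "(\<lambda>n. M * l^n) sums (M * (1 / (1 - l)))"
      by (rule sums_mult, rule geometric_sums) (use l in simp)
    fix n
    have "exp (Re s / x) * ((l * \<sigma> / x)^n / fact n) = l^n * (exp (Re s / x) * ((\<sigma>/x)^n / fact n))"
      by (simp add: power_mult_distrib power_divide)
    also have "\<dots> \<le> l^n * M" using tb[OF that, of n] l by (intro mult_left_mono) auto
    finally show "exp (Re s / x) * ((l * \<sigma> / x)^n / fact n) \<le> M * l^n" by (simp add: mult.commute)
  qed
  define d where "d = Re s + l * \<sigma>"
  have "l * \<sigma> = (\<sigma> - Re s) / 2" using sig by (simp add: l_def)
  then have d: "d > 0" using assms by (simp add: d_def)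
  define K where "K = M * (1 / (1 - l))"
  define x where "x = d / (\<bar>K\<bar> + 1)"
  have x: "x > 0" using d by (simp add: x_def)
  have "exp (Re s / x) * exp (l * \<sigma> / x) = exp (d / x)"
    by (simp add: d_def exp_add[symmetric] add_divide_distrib)
  also have "d / x = \<bar>K\<bar> + 1" using d by (simp add: x_def)
  finally have "exp (\<bar>K\<bar> + 1) \<le> K" using sumb[OF x] by (simp add: K_def)
  moreover have "\<bar>K\<bar> + 1 + 1 \<le> exp (\<bar>K\<bar> + 1)" using exp_ge_add_one_self[of "\<bar>K\<bar> + 1"] by simp
  ultimately show False by linarith
qed

end
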